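(* Let $G=(V,E)$ be a finite bipartite graph and fix an edge $e=\{b,w\}$ with $b$ black and $w$ white. Let $G^e=G-e$ (delete the edge only) and $G'=G-\{b,w\}$ (delete both vertices and all incident edges). Then: (i) the channels in $\mathcal{C}_B(G)$ not containing $b$ are exactly the channels in $\mathcal{C}_B(G^e)$ not containing $b$; (ii) if there is a channel $B\in\mathcal{C}_B(G^e)$ with $b\in B$, then there is a bijection $\mathcal{C}_B(G)\to\mathcal{C}_B(G')$ which maps every channel not containing $b$ to itself.
   Context: A channel of a graph $H$ is a vertex set $C$ such that every vertex of $H$ is adjacent to an even number of vertices of $C$ (the empty set included). For a bipartite graph with black/white coloring, $\mathcal{C}_B(H)$ denotes the set of channels of $H$ consisting only of black vertices. *)

theory Defs
  imports Main
begin

definition graph :: "'a set \<Rightarrow> 'a set set \<Rightarrow> bool" where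
  "graph V E \<longleftrightarrow> finite V \<and> (\<forall>e\<in>E. e \<subseteq> V \<and> card e = 2)"

text \<open>Bipartite graph with black vertex set Bk (white vertices are V - Bk):
  every edge has exactly one black and one white endpoint.\<close>
definition bipartite_graph :: "'a set \<Rightarrow> 'a set set \<Rightarrow> 'a set \<Rightarrow> bool" where
  "bipartite_graph V E Bk \<longleftrightarrow> graph V E \<and> Bk \<subseteq> V \<and>
     (\<forall>e\<in>E. card (e \<inter> Bk) = 1 \<and> card (e - Bk) = 1)"

definition channel :: "'a set \<Rightarrow> 'a set set \<Rightarrow> 'a set \<Rightarrow> bool" where
  "channel V E C \<longleftrightarrow> C \<subseteq> V \<and> (\<forall>v\<in>V. even (card {u\<in>C. {u, v} \<in> E}))"

definition black_channels :: "'a set \<Rightarrow> 'a set set \<Rightarrow> 'a set \<Rightarrow> 'a set set" where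
  "black_channels V E Bk = {C. channel V E C \<and> C \<subseteq> Bk}"

definition delete_edge :: "'a set set \<Rightarrow> 'a set \<Rightarrow> 'a set set" where
  "delete_edge E e = E - {e}"

definition delete_vertices_edges :: "'a set set \<Rightarrow> 'a set \<Rightarrow> 'a set set" where
  "delete_vertices_edges E S = {f\<in>E. f \<inter> S = {}}"

end

theory Submission
  imports Defs
begin

lemma par_diff:
  assumes "finite A" "finite B"
  shows "even (card ((A - B) \<union> (B - A))) = (even (card A) = even (card B))"
proof -
  have 1: "card ((A - B) \<union> (B - A)) = card (A - B) + card (B - A)"
    by (rule card_Un_disjoint) (use assms in auto)
  have 2: "card A = card (A \<inter> B) + card (A - B)"
    using assms(1) by (rule card_Int_Diff)
  have 3: "card B = card (B \<inter> A) + card (B - A)"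
    using assms(2) by (rule card_Int_Diff)
  have 4: "B \<inter> A = A \<inter> B" by blast
  have "card A + card B = card ((A - B) \<union> (B - A)) + 2 * card (A \<inter> B)"
    using 1 2 3 4 by simp
  then show ?thesis by presburger
qed

definition nb :: "'a set set \<Rightarrow> 'a set \<Rightarrow> 'a \<Rightarrow> 'a set" where
  "nb E C v = {u\<in>C. {u, v} \<in> E}"

lemma nb_diff: "nb E ((C - B) \<union> (B - C)) v = (nb E C v - nb E B v) \<union> (nb E B v - nb E C v)"
  unfolding nb_def by auto

lemma channel_nb: "channel V E C \<longleftrightarrow> C \<subseteq> V \<and> (\<forall>v\<in>V. even (card (nb E C v)))"
  unfolding channel_def nb_def by simp

theorem lemma5p4:
  fixes V :: "'a set" and E :: "'a set set" and Bk :: "'a set" and b w :: 'a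
  assumes "bipartite_graph V E Bk"
    and "{b, w} \<in> E" and "b \<in> Bk" and "w \<notin> Bk"
  shows "{C \<in> black_channels V E Bk. b \<notin> C}
           = {C \<in> black_channels V (delete_edge E {b, w}) Bk. b \<notin> C}
       \<and> ((\<exists>B \<in> black_channels V (delete_edge E {b, w}) Bk. b \<in> B) \<longrightarrow>
         (\<exists>f. bij_betw f (black_channels V E Bk)
                 (black_channels (V - {b, w}) (delete_vertices_edges E {b, w}) (Bk - {b}))
             \<and> (\<forall>C \<in> black_channels V E Bk. b \<notin> C \<longrightarrow> f C = C)))"
proof -
  define E' where "E' = delete_edge E {b, w}"
  define E'' where "E'' = delete_vertices_edges E {b, w}"
  have finV: "finite V" and Esub: "\<And>e. e \<in> E \<Longrightarrow> e \<subseteq> V \<and> card e = 2"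
    and bip: "\<And>e. e \<in> E \<Longrightarrow> card (e \<inter> Bk) = 1"
    using assms(1) unfolding bipartite_graph_def graph_def by auto
  have bV: "b \<in> V" and wV: "w \<in> V" using Esub[OF assms(2)] by auto
  have bw: "b \<noteq> w" using assms by auto
  have black_adj: "v \<notin> Bk" if "u \<in> Bk" "{u, v} \<in> E" for u v
  proof
    assume "v \<in> Bk"
    then have "{u, v} \<inter> Bk = {u, v}" using that by auto
    with bip[OF that(2)] have "card {u, v} = 1" by simp
    with Esub[OF that(2)] show False by simp
  qed
  have nbE': "nb E' C v = nb E C v - (if v = w then {b} else {})" if "C \<subseteq> Bk" for C v
    using that assms(4) unfolding nb_def E'_def delete_edge_def
    by (auto simp: doubleton_eq_iff)
  have nbblack: "nb E C v = {}" if "C \<subseteq> Bk" "v \<in> Bk" for C v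
    using that black_adj unfolding nb_def by (auto simp: insert_commute)
  have nbE'': "nb E'' D v = nb E D v" if "D \<subseteq> Bk" "b \<notin> D" "v \<noteq> b" "v \<noteq> w" for D v
    using that assms(4) unfolding nb_def E''_def delete_vertices_edges_def by auto
  have finnb: "finite (nb E C v)" if "C \<subseteq> V" for C v
  proof -
    have "nb E C v \<subseteq> V" using that unfolding nb_def by auto
    then show ?thesis using finV by (rule finite_subset)
  qed
  have P1: "C \<in> black_channels V E Bk \<longleftrightarrow> C \<in> black_channels V E' Bk" if "b \<notin> C" for C
  proof -
    have "C \<subseteq> Bk \<Longrightarrow> nb E' C v = nb E C v" for v
      using nbE'[of C v] that unfolding nb_def by auto
    then show ?thesis unfolding black_channels_def channel_nb by auto
  qed
  have P2: "C \<in> black_channels (V - {b, w}) E'' (Bk - {b}) \<longleftrightarrow>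
      C \<subseteq> V \<and> C \<subseteq> Bk \<and> b \<notin> C \<and> (\<forall>v\<in>V - {w}. even (card (nb E C v)))" for C
  proof
    assume h: "C \<in> black_channels (V - {b, w}) E'' (Bk - {b})"
    then have C: "C \<subseteq> V" "C \<subseteq> Bk" "b \<notin> C" "\<forall>v\<in>V-{b,w}. even (card (nb E'' C v))"
      unfolding black_channels_def channel_nb by auto
    have "even (card (nb E C v))" if "v \<in> V - {w}" for v
    proof (cases "v = b")
      case True then show ?thesis using nbblack[OF C(2)] assms(3) by simp
    next
      case False
      have v: "v \<in> V - {b, w}" using that False by auto
      then have "even (card (nb E'' C v))" using C(4) by blast
      moreover have "nb E'' C v = nb E C v" using nbE''[OF C(2) C(3) False] v by blast
      ultimately show ?thesis by simp
    qed
    then show "C \<subseteq> V \<and> C \<subseteq> Bk \<and> b \<notin> C \<and> (\<forall>v\<in>V - {w}. even (card (nb E C v)))"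
      using C by auto
  next
    assume h: "C \<subseteq> V \<and> C \<subseteq> Bk \<and> b \<notin> C \<and> (\<forall>v\<in>V - {w}. even (card (nb E C v)))"
    then have "w \<notin> C" using assms(4) by auto
    then show "C \<in> black_channels (V - {b, w}) E'' (Bk - {b})"
      using h nbE'' unfolding black_channels_def channel_nb by auto
  qed
  have P3: "C \<in> black_channels V E Bk \<longleftrightarrow>
      C \<subseteq> V \<and> C \<subseteq> Bk \<and> (\<forall>v\<in>V. even (card (nb E C v)))" for C
    unfolding black_channels_def channel_nb by auto
  have part2: "\<exists>f. bij_betw f (black_channels V E Bk)
                 (black_channels (V - {b, w}) E'' (Bk - {b}))
             \<and> (\<forall>C \<in> black_channels V E Bk. b \<notin> C \<longrightarrow> f C = C)"
    if "B \<in> black_channels V E' Bk" "b \<in> B" for B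
  proof -
    have B: "B \<subseteq> V" "B \<subseteq> Bk" "\<forall>v\<in>V. even (card (nb E' B v))"
      using that unfolding black_channels_def channel_nb by auto
    have Beven: "even (card (nb E B v))" if "v \<in> V" "v \<noteq> w" for v
      using B(3) nbE'[OF B(2), of v] that by auto
    have bin: "b \<in> nb E B w" using \<open>b \<in> B\<close> assms(2) unfolding nb_def by simp
    have "nb E B w = insert b (nb E' B w)" "b \<notin> nb E' B w"
      using nbE'[OF B(2), of w] bin by auto
    note ins = this
    have fin': "finite (nb E' B w)" using finnb[OF B(1), of w] nbE'[OF B(2), of w] by simp
    have e: "even (card (nb E' B w))" using B(3) wV by blast
    have "card (nb E B w) = Suc (card (nb E' B w))"
      unfolding ins(1) using fin' ins(2) by (rule card_insert_disjoint)
    then have Bodd: "odd (card (nb E B w))" using e by simp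
    define sd where "sd C = (C - B) \<union> (B - C)" for C
    have sdV: "C \<subseteq> V \<Longrightarrow> sd C \<subseteq> V" "C \<subseteq> Bk \<Longrightarrow> sd C \<subseteq> Bk" for C
      using B unfolding sd_def by auto
    have sdpar: "even (card (nb E (sd C) v)) = (even (card (nb E C v)) = even (card (nb E B v)))"
      if "C \<subseteq> V" for C v
      unfolding sd_def nb_diff by (rule par_diff[OF finnb[OF that] finnb[OF B(1)]])
    define f where "f C = (if b \<in> C then sd C else C)" for C
    have sdsd: "sd (sd C) = C" for C unfolding sd_def by auto
    have map: "f C \<in> black_channels (V - {b, w}) E'' (Bk - {b})"
      if "C \<in> black_channels V E Bk" for C
    proof -
      have C: "C \<subseteq> V" "C \<subseteq> Bk" "\<forall>v\<in>V. even (card (nb E C v))" using that P3 by auto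
      show ?thesis
      proof (cases "b \<in> C")
        case True
        then show ?thesis unfolding P2 f_def using C sdV sdpar Beven \<open>b \<in> B\<close>
          unfolding sd_def by auto
      next
        case False
        then show ?thesis unfolding P2 f_def using C by auto
      qed
    qed
    have fw: "even (card (nb E (f C) w)) = (b \<notin> C)" if "C \<in> black_channels V E Bk" for C
      using that P3 sdpar Bodd wV unfolding f_def by auto
    have inj: "inj_on f (black_channels V E Bk)"
    proof (rule inj_onI)
      fix x y assume x: "x \<in> black_channels V E Bk" and y: "y \<in> black_channels V E Bk"
        and e: "f x = f y"
      have "(b \<in> x) = (b \<in> y)" using fw[OF x] fw[OF y] e by auto
      then show "x = y" using e sdsd unfolding f_def by (metis)
    qed
    have surj: "D \<in> f ` black_channels V E Bk"
      if "D \<in> black_channels (V - {b, w}) E'' (Bk - {b})" for D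
    proof -
      have D: "D \<subseteq> V" "D \<subseteq> Bk" "b \<notin> D" "\<forall>v\<in>V - {w}. even (card (nb E D v))"
        using that P2 by auto
      show ?thesis
      proof (cases "even (card (nb E D w))")
        case True
        then have "D \<in> black_channels V E Bk" using D P3 by auto
        moreover have "f D = D" using D unfolding f_def by auto
        ultimately show ?thesis by force
      next
        case False
        have "even (card (nb E (sd D) v))" if "v \<in> V" for v
        proof (cases "v = w")
          case True then show ?thesis using sdpar[OF D(1), of v] Bodd False by simp
        next
          case f: False then show ?thesis using sdpar[OF D(1), of v] Beven[OF that f] D(4) that by auto
        qed
        then have "sd D \<in> black_channels V E Bk"
          unfolding P3 using D sdV by auto
        moreover have "b \<in> sd D" using D \<open>b \<in> B\<close> unfolding sd_def by auto
        then have "f (sd D) = D" unfolding f_def using sdsd by simp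
        ultimately show ?thesis by force
      qed
    qed
    have "bij_betw f (black_channels V E Bk) (black_channels (V - {b, w}) E'' (Bk - {b}))"
      unfolding bij_betw_def using inj map surj by auto
    moreover have "\<forall>C \<in> black_channels V E Bk. b \<notin> C \<longrightarrow> f C = C" unfolding f_def by auto
    ultimately show ?thesis by blast
  qed
  show ?thesis
    unfolding E'_def[symmetric] E''_def[symmetric] using P1 part2 by blast
qed

end
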